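(* Let $H\in\mathbb{R}^{N\times n}$ have full column rank, let $\epsilon>0$, and let $\mathcal{T}\subset\{1,\dots,N\}$ be a nonempty index set such that $H_{\mathcal{T}^c}$ has full column rank and $|\mathcal{T}|>\underline{\sigma}_{\mathcal{T}^c}^2/\overline{\sigma}_{\mathcal{T}}^2$, where $\overline{\sigma}_{\mathcal{T}}$ is the largest singular value of $H_{\mathcal{T}}$ and $\underline{\sigma}_{\mathcal{T}^c}$ is the smallest nonzero singular value of $H_{\mathcal{T}^c}$. Define $$\sigma_1=\max_{\mathbf{v}\in\mathbb{R}^n\setminus\{\mathbf{0}\}}\frac{\|H_{\mathcal{T}}\mathbf{v}\|_1}{\|H_{\mathcal{T}^c}\mathbf{v}\|_1},$$ and suppose the set $\{\mathbf{w}\in\mathrm{range}(H):\|\mathbf{w}_{\mathcal{T}}\|_1>\|\mathbf{w}_{\mathcal{T}^c}\|_1\}$ is nonempty. Let $\mathbf{x}_e$ be an optimal solution of $$\max_{\mathbf{x}\in\mathbb{R}^n}\ \|H_{\mathcal{T}}\mathbf{x}\|_1\quad\text{subject to}\quad\|H_{\mathcal{T}^c}\mathbf{x}\|_1\le\epsilon,$$ and define the attack vector $\mathbf{e}\in\mathbb{R}^N$ by $\mathbf{e}_{\mathcal{T}}=H_{\mathcal{T}}\mathbf{x}_e$, $\mathbf{e}_{\mathcal{T}^c}=\mathbf{0}$. Let $\mathbf{x}^\star\in\mathbb{R}^n$, $\mathbf{y}^\star=H\mathbf{x}^\star$ and $\mathbf{y}=\mathbf{y}^\star+\mathbf{e}$,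 and let $\mathcal{D}(\mathbf{y})$ be any minimizer of $\mathbf{z}\mapsto\|\mathbf{y}-H\mathbf{z}\|_1$ over $\mathbb{R}^n$ (note $\mathcal{D}(\mathbf{y}^\star)=\mathbf{x}^\star$). Then $$\|\mathbf{x}^\star-\mathcal{D}(\mathbf{y})\|_2\ge\frac{\sigma_1-1}{\sqrt{|\mathcal{T}|}\,\overline{\sigma}_{\mathcal{T}}-\underline{\sigma}_{\mathcal{T}^c}}\,\epsilon>0\qquad\text{and}\qquad\|\mathbf{y}-H\mathcal{D}(\mathbf{y})\|_2\le\epsilon.$$ Consequently the attack $\mathbf{e}$ is $(\epsilon,\alpha)$-successful for every $\alpha\le\frac{\sigma_1-1}{\sqrt{|\mathcal{T}|}\overline{\sigma}_{\mathcal{T}}-\underline{\sigma}_{\mathcal{T}^c}}\epsilon$.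
   Context: For $\mathcal{T}\subseteq\{1,\dots,N\}$, $H_{\mathcal{T}}$ denotes the submatrix of $H$ formed by the rows indexed by $\mathcal{T}$, $\mathbf{w}_{\mathcal{T}}$ the subvector of $\mathbf{w}$ indexed by $\mathcal{T}$, and $\mathcal{T}^c$ the complement in $\{1,\dots,N\}$. The ($\ell_1$) decoder is $\mathcal{D}(\mathbf{y})\in\arg\min_{\mathbf{z}\in\mathbb{R}^n}\|\mathbf{y}-H\mathbf{z}\|_1$. An attack $\mathbf{e}$ is called $(\epsilon,\alpha)$-successful if, with $\mathbf{y}=\mathbf{y}^\star+\mathbf{e}$ ($\mathbf{y}^\star$ the true, unattacked measurement and $\mathbf{x}^\star=\mathcal{D}(\mathbf{y}^\star)$), one has $\|\mathbf{x}^\star-\mathcal{D}(\mathbf{y})\|_2\ge\alpha$ and $\|\mathbf{y}-H\mathcal{D}(\mathbf{y})\|_2\le\epsilon$. *)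

theory Defs
  imports "HOL-Analysis.Analysis"
begin

text \<open>Row submatrix H_T, represented with zero padding: the rows of H indexed by T are
kept, all other rows are replaced by zero rows.  Zero rows change neither the rank, the
largest singular value, the nonzero singular values, nor the norms of H_T v.\<close>
definition row_sub :: "'m set \<Rightarrow> real^'n^'m \<Rightarrow> real^'n^'m" where
  "row_sub T H = (\<chi> i. if i \<in> T then H $ i else 0)"

definition l1 :: "real^'m \<Rightarrow> real" where
  "l1 w = (\<Sum>i\<in>UNIV. \<bar>w $ i\<bar>)"

definition l1_on :: "'m set \<Rightarrow> real^'m \<Rightarrow> real" where
  "l1_on T w = (\<Sum>i\<in>T. \<bar>w $ i\<bar>)"

definition singular_values :: "real^'n^'m \<Rightarrow> real set" where
  "singular_values A =
     {sqrt c | c. \<exists>v. v \<noteq> 0 \<and> (transpose A ** A) *v v = c *\<^sub>R v}"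

definition largest_singular_value :: "real^'n^'m \<Rightarrow> real" where
  "largest_singular_value A = Max (singular_values A)"

definition smallest_nonzero_singular_value :: "real^'n^'m \<Rightarrow> real" where
  "smallest_nonzero_singular_value A = Min (singular_values A - {0})"

definition is_l1_decoding :: "real^'n^'m \<Rightarrow> real^'m \<Rightarrow> real^'n \<Rightarrow> bool" where
  "is_l1_decoding H y z \<longleftrightarrow> (\<forall>w. l1 (y - H *v z) \<le> l1 (y - H *v w))"

definition successful_attack ::
  "real^'n^'m \<Rightarrow> real^'n \<Rightarrow> real^'m \<Rightarrow> real \<Rightarrow> real \<Rightarrow> bool" where
  "successful_attack H xstar e \<epsilon> \<alpha> \<longleftrightarrow>
     (\<forall>d. is_l1_decoding H (H *v xstar + e) d \<longrightarrow>
        norm (xstar - d) \<ge> \<alpha> \<and> norm ((H *v xstar + e) - H *v d) \<le> \<epsilon>)"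

end

theory Submission
  imports Defs
begin
lemma bil: fixes A :: "real^'n^'m"
  shows "(A *v v) \<bullet> (A *v w) = ((transpose A ** A) *v v) \<bullet> w"
  by (metis dot_lmul_matrix matrix_vector_mul_assoc transpose_matrix_vector)

lemma quad: fixes a b :: real assumes "\<forall>t. 2*t*b + t^2*a \<le> 0" shows "b = 0"
proof (rule ccontr)
  assume b: "b \<noteq> 0"
  define t where "t = b / (\<bar>a\<bar> + 1)"
  have k: "\<bar>a\<bar> + 1 > 0" by simp
  have "t^2 * (-\<bar>a\<bar>) \<le> t^2 * a" by (rule mult_left_mono) auto
  then have "t^2 * a \<ge> - (t^2 * \<bar>a\<bar>)" by simp
  moreover have "t * b = b^2 / (\<bar>a\<bar> + 1)" by (simp add: t_def power2_eq_square)
  moreover have "t^2 * \<bar>a\<bar> = b^2 / (\<bar>a\<bar> + 1) * (\<bar>a\<bar>/(\<bar>a\<bar> + 1))"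
    by (simp add: t_def power2_eq_square)
  moreover have "\<bar>a\<bar>/(\<bar>a\<bar> + 1) < 1" using k by simp
  moreover have "b^2 / (\<bar>a\<bar> + 1) > 0" using b k by simp
  ultimately have "2*t*b + t^2*a > 0"
  proof -
    assume h: "- (t^2 * \<bar>a\<bar>) \<le> t^2 * a" "t * b = b^2 / (\<bar>a\<bar> + 1)"
      "t^2 * \<bar>a\<bar> = b^2 / (\<bar>a\<bar> + 1) * (\<bar>a\<bar>/(\<bar>a\<bar> + 1))"
      "\<bar>a\<bar>/(\<bar>a\<bar> + 1) < 1" "b^2 / (\<bar>a\<bar> + 1) > 0"
    have "b^2 / (\<bar>a\<bar> + 1) * (\<bar>a\<bar>/(\<bar>a\<bar> + 1)) < b^2 / (\<bar>a\<bar> + 1) * 1"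
      using h(4,5) by (rule mult_strict_left_mono)
    then show ?thesis using h(1-3,5) by linarith
  qed
  with assms show False by (meson not_le)
qed

lemma stationary:
  fixes A :: "real^'n^'m" and s :: real
  assumes v: "norm v = 1"
    and ext: "\<forall>w. s * (norm (A *v w))\<^sup>2 \<le> s * ((norm (A *v v))\<^sup>2 * (norm w)\<^sup>2)"
    and s: "s = 1 \<or> s = -1"
  shows "(transpose A ** A) *v v = (norm (A *v v))\<^sup>2 *\<^sub>R v"
proof -
  define \<mu> where "\<mu> = (norm (A *v v))\<^sup>2"
  define M where "M = transpose A ** A"
  have key: "(M *v v) \<bullet> w = \<mu> * (v \<bullet> w)" for w
  proof -
    define b where "b = (A *v v) \<bullet> (A *v w) - \<mu> * (v \<bullet> w)"
    define a where "a = (norm (A *v w))\<^sup>2 - \<mu> * (norm w)\<^sup>2"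
    have "2*t*(s*b) + t^2*(s*a) \<le> 0" for t
    proof -
      have e: "s * (norm (A *v (v + t *\<^sub>R w)))\<^sup>2 \<le> s * (\<mu> * (norm (v + t *\<^sub>R w))\<^sup>2)"
        using ext unfolding \<mu>_def by blast
      have e1: "(norm (A *v (v + t *\<^sub>R w)))\<^sup>2 = \<mu> + 2*t*((A *v v) \<bullet> (A *v w)) + t^2 * (norm (A *v w))\<^sup>2"
        unfolding \<mu>_def power2_norm_eq_inner
        by (simp add: matrix_vector_right_distrib matrix_vector_mult_scaleR inner_add_left inner_add_right
            inner_commute[of "A *v w" "A *v v"] power2_eq_square algebra_simps)
      have e2: "(norm (v + t *\<^sub>R w))\<^sup>2 = 1 + 2*t*(v \<bullet> w) + t^2 * (norm w)\<^sup>2"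
      proof -
        have vv: "v \<bullet> v = 1" using v by (metis norm_eq_1)
        show ?thesis unfolding power2_norm_eq_inner
          by (simp add: inner_add_left inner_add_right inner_commute[of w v] vv power2_eq_square algebra_simps)
      qed
      have "s * (2*t*b + t^2*a) \<le> 0"
        using e unfolding e1 e2 a_def b_def by (simp add: algebra_simps)
      then show ?thesis by (simp add: algebra_simps)
    qed
    then have "s * b = 0" using quad by blast
    then have "b = 0" using s by auto
    then show ?thesis unfolding b_def M_def by (simp add: bil)
  qed
  have "(M *v v - \<mu> *\<^sub>R v) \<bullet> (M *v v - \<mu> *\<^sub>R v) = 0"
    by (simp add: inner_diff_left key inner_commute[of _ v])
  then show ?thesis unfolding M_def \<mu>_def by simp
qed

lemma scale_sq:
  fixes A :: "real^'n^'m" assumes "w \<noteq> 0"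
  shows "(norm (A *v ((1 / norm w) *\<^sub>R w)))\<^sup>2 = (norm (A *v w))\<^sup>2 / (norm w)\<^sup>2"
    and "(1 / norm w) *\<^sub>R w \<in> sphere 0 1"
  using assms by (auto simp: matrix_vector_mult_scaleR power_divide)

lemma exists_max:
  fixes A :: "real^'n^'m"
  obtains v where "norm v = 1" "\<forall>w. (norm (A *v w))\<^sup>2 \<le> (norm (A *v v))\<^sup>2 * (norm w)\<^sup>2"
proof -
  have "continuous_on (sphere 0 1) (\<lambda>v::real^'n. (norm (A *v v))\<^sup>2)"
    by (intro continuous_intros)
  then obtain v where v: "v \<in> sphere (0::real^'n) 1" "\<forall>y\<in>sphere 0 1. (norm (A *v y))\<^sup>2 \<le> (norm (A *v v))\<^sup>2"
    using continuous_attains_sup[where s="sphere (0::real^'n) 1"] by fastforce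
  have "(norm (A *v w))\<^sup>2 \<le> (norm (A *v v))\<^sup>2 * (norm w)\<^sup>2" for w
  proof (cases "w = 0")
    case False
    then have "(norm (A *v w))\<^sup>2 / (norm w)\<^sup>2 \<le> (norm (A *v v))\<^sup>2"
      using v(2) scale_sq[OF False] by metis
    then show ?thesis using False by (simp add: divide_le_eq)
  qed simp
  then show ?thesis using that v(1) by simp
qed

lemma exists_min:
  fixes A :: "real^'n^'m"
  obtains v where "norm v = 1" "\<forall>w. (norm (A *v v))\<^sup>2 * (norm w)\<^sup>2 \<le> (norm (A *v w))\<^sup>2"
proof -
  have "continuous_on (sphere 0 1) (\<lambda>v::real^'n. (norm (A *v v))\<^sup>2)"
    by (intro continuous_intros)
  then obtain v where v: "v \<in> sphere (0::real^'n) 1" "\<forall>y\<in>sphere 0 1. (norm (A *v v))\<^sup>2 \<le> (norm (A *v y))\<^sup>2"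
    using continuous_attains_inf[where s="sphere (0::real^'n) 1"] by fastforce
  have "(norm (A *v v))\<^sup>2 * (norm w)\<^sup>2 \<le> (norm (A *v w))\<^sup>2" for w
  proof (cases "w = 0")
    case False
    then have "(norm (A *v v))\<^sup>2 \<le> (norm (A *v w))\<^sup>2 / (norm w)\<^sup>2"
      using v(2) scale_sq[OF False] by metis
    then show ?thesis using False by (simp add: le_divide_eq)
  qed simp
  then show ?thesis using that v(1) by simp
qed

lemma eig_finite:
  fixes A :: "real^'n^'m"
  shows "finite {c. \<exists>v. v \<noteq> 0 \<and> (transpose A ** A) *v v = c *\<^sub>R v}" (is "finite ?E")
proof -
  define M where "M = transpose A ** A"
  define g where "g c = (SOME v. v \<noteq> 0 \<and> M *v v = c *\<^sub>R v)" for c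
  have g: "g c \<noteq> 0 \<and> M *v g c = c *\<^sub>R g c" if "c \<in> ?E" for c
  proof -
    from that have "\<exists>v. v \<noteq> 0 \<and> M *v v = c *\<^sub>R v" unfolding M_def by simp
    then show ?thesis unfolding g_def by (rule someI_ex)
  qed
  have inj: "inj_on g ?E"
  proof (rule inj_onI)
    fix c c' assume h: "c \<in> ?E" "c' \<in> ?E" "g c = g c'"
    have g1: "g c \<noteq> 0 \<and> M *v g c = c *\<^sub>R g c" using g[OF h(1)] .
    have g2: "M *v g c' = c' *\<^sub>R g c'" using g[OF h(2)] by blast
    show "c = c'" using g1 g2 h(3) by auto
  qed
  have orth: "pairwise orthogonal (g ` ?E)"
  proof (rule pairwiseI)
    fix x y assume xE: "x \<in> g ` ?E" and yE: "y \<in> g ` ?E" and ne: "x \<noteq> y"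
    obtain c where cE: "c \<in> ?E" and xc: "x = g c" using xE by blast
    obtain c' where c'E: "c' \<in> ?E" and yc: "y = g c'" using yE by blast
    have cc: "c \<noteq> c'" using ne xc yc by blast
    have "c * (g c \<bullet> g c') = (M *v g c) \<bullet> g c'" using g[OF cE] by simp
    also have "\<dots> = (A *v g c) \<bullet> (A *v g c')" unfolding M_def by (simp add: bil)
    also have "\<dots> = (M *v g c') \<bullet> g c" unfolding M_def by (metis bil inner_commute)
    also have "\<dots> = c' * (g c \<bullet> g c')" using g[OF c'E] by (simp add: inner_commute)
    finally have "c * (g c \<bullet> g c') = c' * (g c \<bullet> g c')" .
    then have "g c \<bullet> g c' = 0" using cc by simp
    then show "orthogonal x y" using xc yc by (simp add: orthogonal_def)
  qed
  have "0 \<notin> g ` ?E"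
  proof
    assume "0 \<in> g ` ?E"
    then obtain c where c: "c \<in> ?E" "0 = g c" by (rule imageE)
    from g[OF c(1)] c(2) show False by simp
  qed
  then have "independent (g ` ?E)" by (rule pairwise_orthogonal_independent[OF orth])
  then have "finite (g ` ?E)" by (rule conjunct1[OF independent_bound])
  then show ?thesis by (rule finite_imageD[OF _ inj])
qed

lemma sv_eq: "singular_values A = sqrt ` {c. \<exists>v. v \<noteq> 0 \<and> (transpose A ** A) *v v = c *\<^sub>R v}"
  unfolding singular_values_def by blast

lemma sv_finite: "finite (singular_values A)"
  unfolding sv_eq using eig_finite by blast

lemma sqrt_bound:
  assumes "(x::real)\<^sup>2 \<le> \<mu> * y\<^sup>2" "x \<ge> 0" "y \<ge> 0"
  shows "x \<le> sqrt \<mu> * y"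
proof -
  have "sqrt (x\<^sup>2) \<le> sqrt (\<mu> * y\<^sup>2)" using assms(1) by (rule real_sqrt_le_mono)
  then show ?thesis using assms by (simp add: real_sqrt_mult)
qed

lemma sv_upper:
  fixes A :: "real^'n^'m"
  shows "norm (A *v u) \<le> largest_singular_value A * norm u"
proof -
  obtain v where v: "norm v = 1" "\<forall>w. (norm (A *v w))\<^sup>2 \<le> (norm (A *v v))\<^sup>2 * (norm w)\<^sup>2"
    by (rule exists_max)
  define \<mu> where "\<mu> = (norm (A *v v))\<^sup>2"
  have "(transpose A ** A) *v v = \<mu> *\<^sub>R v"
    unfolding \<mu>_def by (rule stationary[where s=1]) (use v in auto)
  moreover have "v \<noteq> 0" using v by auto
  ultimately have "sqrt \<mu> \<in> singular_values A" unfolding sv_eq by blast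
  then have m: "sqrt \<mu> \<le> largest_singular_value A"
    unfolding largest_singular_value_def using sv_finite by (rule Max_ge[rotated])
  have "norm (A *v u) \<le> sqrt \<mu> * norm u"
    using v(2) unfolding \<mu>_def by (intro sqrt_bound) auto
  also have "\<dots> \<le> largest_singular_value A * norm u" using m by (rule mult_right_mono) simp
  finally show ?thesis .
qed

lemma sv_lower:
  fixes A :: "real^'n^'m"
  assumes inj: "inj ((*v) A)"
  shows "smallest_nonzero_singular_value A * norm u \<le> norm (A *v u)"
proof -
  obtain v where v: "norm v = 1" "\<forall>w. (norm (A *v v))\<^sup>2 * (norm w)\<^sup>2 \<le> (norm (A *v w))\<^sup>2"
    by (rule exists_min)
  define \<mu> where "\<mu> = (norm (A *v v))\<^sup>2"
  have "(transpose A ** A) *v v = \<mu> *\<^sub>R v"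
    unfolding \<mu>_def by (rule stationary[where s="-1"]) (use v in auto)
  moreover have vne: "v \<noteq> 0" using v by auto
  ultimately have "sqrt \<mu> \<in> singular_values A" unfolding sv_eq by blast
  moreover have "A *v v \<noteq> 0"
    using inj vne by (metis injD matrix_vector_mult_0_right)
  then have "sqrt \<mu> \<noteq> 0" unfolding \<mu>_def by simp
  ultimately have "sqrt \<mu> \<in> singular_values A - {0}" by blast
  then have m: "smallest_nonzero_singular_value A \<le> sqrt \<mu>"
    unfolding smallest_nonzero_singular_value_def using sv_finite
    by (meson Min_le finite_Diff)
  have "smallest_nonzero_singular_value A * norm u \<le> sqrt \<mu> * norm u"
    using m by (rule mult_right_mono) simp
  also have "sqrt \<mu> * norm u = sqrt (\<mu> * (norm u)\<^sup>2)" by (simp add: real_sqrt_mult)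
  also have "\<dots> \<le> sqrt ((norm (A *v u))\<^sup>2)" using v(2) unfolding \<mu>_def
    by (intro real_sqrt_le_mono) auto
  also have "\<dots> = norm (A *v u)" by simp
  finally show ?thesis .
qed

lemma rowsub_mv: "(row_sub S H *v x) $ i = (if i \<in> S then (H *v x) $ i else 0)"
  by (simp add: row_sub_def matrix_vector_mult_def)

lemma l1_rowsub: "l1 (row_sub S H *v x) = l1_on S (H *v x)"
  by (simp add: l1_def l1_on_def rowsub_mv if_distrib sum.If_cases)

lemma l1_scale: "l1 (c *\<^sub>R z) = \<bar>c\<bar> * l1 z"
  by (simp add: l1_def abs_mult sum_distrib_left)

lemma norm_le_l1: "norm z \<le> l1 z"
  unfolding l1_def by (rule norm_le_l1_cart)

lemma l1_nonneg: "l1 z \<ge> 0"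
  unfolding l1_def by (simp add: sum_nonneg)

lemma l1_cs:
  fixes z :: "real^'m"
  assumes z: "\<forall>i. i \<notin> T \<longrightarrow> z $ i = 0"
  shows "l1 z \<le> sqrt (real (card T)) * norm z"
proof -
  have "l1 z = (\<Sum>i\<in>T. \<bar>z $ i\<bar>)"
    unfolding l1_def by (rule sum.mono_neutral_right) (use z in auto)
  then have "l1 z = (\<Sum>i\<in>T. 1 * \<bar>z $ i\<bar>)" by simp
  moreover have "(norm z)\<^sup>2 = (\<Sum>i\<in>T. (\<bar>z $ i\<bar>)\<^sup>2)"
  proof -
    have "(norm z)\<^sup>2 = z \<bullet> z" by (rule power2_norm_eq_inner)
    also have "\<dots> = (\<Sum>i\<in>UNIV. (z $ i)\<^sup>2)"
      by (simp add: inner_vec_def inner_real_def power2_eq_square)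
    also have "\<dots> = (\<Sum>i\<in>T. (z $ i)\<^sup>2)"
      by (rule sum.mono_neutral_right) (use z in auto)
    finally show ?thesis by simp
  qed
  moreover have "(\<Sum>i\<in>T. 1 * \<bar>z $ i\<bar>)\<^sup>2 \<le> (\<Sum>i\<in>T. 1\<^sup>2) * (\<Sum>i\<in>T. (\<bar>z $ i\<bar>)\<^sup>2)"
    by (rule Cauchy_Schwarz_ineq_sum)
  ultimately have "(l1 z)\<^sup>2 \<le> real (card T) * (norm z)\<^sup>2" by simp
  then show ?thesis by (intro sqrt_bound) (auto simp: l1_nonneg)
qed

lemma main_bound:
  fixes H :: "real^'n^'m" and T :: "'m set" and \<epsilon> :: real
    and xe xstar d :: "real^'n" and e y :: "real^'m"
  assumes xe_feas: "l1 (row_sub (- T) H *v xe) \<le> \<epsilon>"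
    and e_def: "e = (\<chi> i. if i \<in> T then (row_sub T H *v xe) $ i else 0)"
    and y_def: "y = H *v xstar + e"
    and d_dec: "is_l1_decoding H y d"
  shows "norm (y - H *v d) \<le> \<epsilon>"
    and "l1 (row_sub T H *v xe) - l1 (row_sub T H *v (xstar - d)) + l1 (row_sub (- T) H *v (xstar - d)) \<le> \<epsilon>"
proof -
  have pw: "(y - H *v (xstar + xe)) $ i = (if i \<in> T then 0 else - (H *v xe) $ i)" for i
    unfolding y_def e_def by (simp add: rowsub_mv matrix_vector_right_distrib)
  have r1: "l1 (y - H *v (xstar + xe)) = l1 (row_sub (- T) H *v xe)"
    unfolding l1_rowsub unfolding l1_def l1_on_def pw
    by (simp add: if_distrib sum.If_cases Compl_eq_Diff_UNIV)
  have le: "l1 (y - H *v d) \<le> \<epsilon>"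
    using d_dec[unfolded is_l1_decoding_def, rule_format, of "xstar + xe"] r1 xe_feas by linarith
  then show "norm (y - H *v d) \<le> \<epsilon>" using norm_le_l1 order_trans by blast
  define u where "u = xstar - d"
  have yd: "y - H *v d = H *v u + e"
    unfolding u_def y_def by (simp add: matrix_vector_mult_diff_distrib)
  have pt: "(if i \<in> T then \<bar>(H *v xe) $ i\<bar> - \<bar>(H *v u) $ i\<bar> else \<bar>(H *v u) $ i\<bar>)
       \<le> \<bar>(y - H *v d) $ i\<bar>" for i
    unfolding yd e_def by (auto simp: rowsub_mv)
  have "(\<Sum>i\<in>UNIV. (if i \<in> T then \<bar>(H *v xe) $ i\<bar> - \<bar>(H *v u) $ i\<bar> else \<bar>(H *v u) $ i\<bar>))
        \<le> l1 (y - H *v d)"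
    unfolding l1_def by (rule sum_mono) (rule pt)
  moreover have "(\<Sum>i\<in>UNIV. (if i \<in> T then \<bar>(H *v xe) $ i\<bar> - \<bar>(H *v u) $ i\<bar> else \<bar>(H *v u) $ i\<bar>))
     = l1 (row_sub T H *v xe) - l1 (row_sub T H *v u) + l1 (row_sub (- T) H *v u)"
    unfolding l1_rowsub l1_on_def by (simp add: sum.If_cases sum_subtractf Compl_eq_Diff_UNIV)
  ultimately show "l1 (row_sub T H *v xe) - l1 (row_sub T H *v (xstar - d)) + l1 (row_sub (- T) H *v (xstar - d)) \<le> \<epsilon>"
    using le unfolding u_def by linarith
qed

theorem theorem2:
  fixes H :: "real^'n^'m" and T :: "'m set" and \<epsilon> :: real
    and xe xstar d :: "real^'n" and e y :: "real^'m" and \<sigma>1 :: real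
  assumes Hrank: "rank H = CARD('n)"
    and eps: "\<epsilon> > 0"
    and Tne: "T \<noteq> {}" and Tproper: "T \<noteq> UNIV"
    and Tcrank: "rank (row_sub (- T) H) = CARD('n)"
    and Tcard: "real (card T) >
       (smallest_nonzero_singular_value (row_sub (- T) H))\<^sup>2 /
       (largest_singular_value (row_sub T H))\<^sup>2"
    and sigma1: "\<sigma>1 = Sup {l1 (row_sub T H *v v) / l1 (row_sub (- T) H *v v) | v. v \<noteq> 0}"
    and nonempty: "\<exists>w \<in> range (\<lambda>x. H *v x). l1_on T w > l1_on (- T) w"
    and xe_feas: "l1 (row_sub (- T) H *v xe) \<le> \<epsilon>"
    and xe_opt: "\<forall>x. l1 (row_sub (- T) H *v x) \<le> \<epsilon> \<longrightarrow>
                   l1 (row_sub T H *v x) \<le> l1 (row_sub T H *v xe)"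
    and e_def: "e = (\<chi> i. if i \<in> T then (row_sub T H *v xe) $ i else 0)"
    and y_def: "y = H *v xstar + e"
    and d_dec: "is_l1_decoding H y d"
  shows "norm (xstar - d) \<ge>
           (\<sigma>1 - 1) / (sqrt (real (card T)) * largest_singular_value (row_sub T H)
                        - smallest_nonzero_singular_value (row_sub (- T) H)) * \<epsilon>
       \<and> (\<sigma>1 - 1) / (sqrt (real (card T)) * largest_singular_value (row_sub T H)
                        - smallest_nonzero_singular_value (row_sub (- T) H)) * \<epsilon> > 0
       \<and> norm (y - H *v d) \<le> \<epsilon>
       \<and> (\<forall>\<alpha>. \<alpha> \<le> (\<sigma>1 - 1) / (sqrt (real (card T)) * largest_singular_value (row_sub T H)
                        - smallest_nonzero_singular_value (row_sub (- T) H)) * \<epsilon>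
               \<longrightarrow> successful_attack H xstar e \<epsilon> \<alpha>)"
proof -
  define HT where "HT = row_sub T H"
  define HC where "HC = row_sub (- T) H"
  define sb where "sb = largest_singular_value HT"
  define sc where "sc = smallest_nonzero_singular_value HC"
  define Dn where "Dn = sqrt (real (card T)) * sb - sc"
  define L where "L = l1 (HT *v xe)"
  define S where "S = {l1 (HT *v v) / l1 (HC *v v) | v. v \<noteq> 0}"
  have injC: "inj ((*v) HC)" using Tcrank full_rank_injective unfolding HC_def by blast
  have C0: "HC *v v \<noteq> 0" if "v \<noteq> 0" for v
    using injC that by (metis injD matrix_vector_mult_0_right)
  have Cpos: "l1 (HC *v v) > 0" if "v \<noteq> 0" for v
  proof -
    have "norm (HC *v v) > 0" using C0[OF that] by simp
    then show ?thesis using norm_le_l1[of "HC *v v"] by linarith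
  qed
  have Sbound: "r \<le> L / \<epsilon>" if "r \<in> S" for r
  proof -
    obtain v where v: "v \<noteq> 0" "r = l1 (HT *v v) / l1 (HC *v v)" using \<open>r \<in> S\<close> S_def by blast
    define b where "b = l1 (HC *v v)"
    have b: "b > 0" using Cpos[OF v(1)] b_def by simp
    define c where "c = \<epsilon> / b"
    have c: "c > 0" using b eps c_def by simp
    have "l1 (HC *v (c *\<^sub>R v)) = \<epsilon>"
      using b c eps by (simp add: matrix_vector_mult_scaleR l1_scale c_def b_def)
    then have "l1 (HT *v (c *\<^sub>R v)) \<le> L"
      using xe_opt unfolding L_def HT_def HC_def by simp
    then have "c * l1 (HT *v v) \<le> L" using c by (simp add: matrix_vector_mult_scaleR l1_scale)
    then have "\<epsilon> * l1 (HT *v v) / b \<le> L" by (simp add: c_def)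
    then have "l1 (HT *v v) / b \<le> L / \<epsilon>" using eps b
      by (simp add: field_simps)
    then show ?thesis using v(2) b_def by simp
  qed
  obtain x where x: "l1_on T (H *v x) > l1_on (- T) (H *v x)" using nonempty by blast
  have x_ne: "x \<noteq> 0" using x by (auto simp: l1_on_def)
  define r where "r = l1 (HT *v x) / l1 (HC *v x)"
  have rS: "r \<in> S" using x_ne unfolding S_def r_def by blast
  have r1: "r > 1" using x Cpos[OF x_ne] unfolding r_def HT_def HC_def l1_rowsub by simp
  have bdd: "bdd_above S" using Sbound by (meson bdd_above.I)
  have s1: "\<sigma>1 = Sup S" unfolding sigma1 S_def HT_def HC_def ..
  have "r \<le> \<sigma>1" unfolding s1 using rS bdd by (rule cSup_upper)
  then have sig1: "\<sigma>1 > 1" using r1 by linarith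
  have "\<sigma>1 \<le> L / \<epsilon>" unfolding s1 using rS Sbound by (intro cSup_least) auto
  then have sigL: "\<sigma>1 * \<epsilon> \<le> L" using eps by (simp add: le_divide_eq)
  have HTx: "HT *v x \<noteq> 0"
  proof
    assume "HT *v x = 0"
    then have "l1 (HT *v x) = 0" by (simp add: l1_def)
    then show False using x l1_nonneg[of "HC *v x"] unfolding HT_def HC_def l1_rowsub by simp
  qed
  have "norm (HT *v x) \<le> sb * norm x" unfolding sb_def by (rule sv_upper)
  then have sbpos: "sb > 0" using HTx x_ne
    by (metis mult_nonpos_nonneg norm_ge_zero zero_less_norm_iff not_le order_less_le_trans)
  have "sc\<^sup>2 < real (card T) * sb\<^sup>2"
    using Tcard sbpos unfolding sc_def sb_def HT_def HC_def by (simp add: pos_divide_less_eq)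
  then have "sqrt (sc\<^sup>2) < sqrt (real (card T) * sb\<^sup>2)" by (rule real_sqrt_less_mono)
  then have "\<bar>sc\<bar> < sqrt (real (card T)) * sb" using sbpos by (simp add: real_sqrt_mult)
  then have Dpos: "Dn > 0" unfolding Dn_def by linarith
  define c where "c = (\<sigma>1 - 1) / Dn * \<epsilon>"
  have cpos: "c > 0" unfolding c_def using sig1 Dpos eps by simp
  have gen: "c \<le> norm (xstar - d') \<and> norm (y - H *v d') \<le> \<epsilon>" if dd: "is_l1_decoding H y d'" for d'
  proof -
    define u where "u = xstar - d'"
    have res: "norm (y - H *v d') \<le> \<epsilon>" by (rule main_bound(1)[OF xe_feas e_def y_def dd])
    have mb: "L - l1 (HT *v u) + l1 (HC *v u) \<le> \<epsilon>"
      using main_bound(2)[OF xe_feas e_def y_def dd] unfolding L_def HT_def HC_def u_def .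
    have "l1 (HT *v u) \<le> sqrt (real (card T)) * norm (HT *v u)"
      by (rule l1_cs) (simp add: HT_def rowsub_mv)
    also have "\<dots> \<le> sqrt (real (card T)) * (sb * norm u)"
      unfolding sb_def by (intro mult_left_mono sv_upper) simp
    finally have a1: "l1 (HT *v u) \<le> sqrt (real (card T)) * sb * norm u" by simp
    have "sc * norm u \<le> norm (HC *v u)" unfolding sc_def by (rule sv_lower[OF injC])
    also have "\<dots> \<le> l1 (HC *v u)" by (rule norm_le_l1)
    finally have a2: "sc * norm u \<le> l1 (HC *v u)" .
    have "(\<sigma>1 - 1) * \<epsilon> \<le> Dn * norm u"
      using a1 a2 mb sigL unfolding Dn_def by (simp add: algebra_simps)
    then have "c \<le> norm u" unfolding c_def using Dpos
      by (simp add: field_simps)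
    then show ?thesis using res u_def by simp
  qed
  have att: "successful_attack H xstar e \<epsilon> \<alpha>" if "\<alpha> \<le> c" for \<alpha>
    unfolding successful_attack_def using gen that y_def by fastforce
  have eq: "(\<sigma>1 - 1) / (sqrt (real (card T)) * largest_singular_value (row_sub T H)
                        - smallest_nonzero_singular_value (row_sub (- T) H)) * \<epsilon> = c"
    unfolding c_def Dn_def sb_def sc_def HT_def HC_def by (rule refl)
  have g1: "c \<le> norm (xstar - d)" and g2: "norm (y - H *v d) \<le> \<epsilon>" using gen[OF d_dec] by auto
  show ?thesis unfolding eq using g1 g2 cpos att by blast
qed

end
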